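(* Let $G_k=(V,E,k)$ be a simple digraph with positive edge labels $k\in\mathbb{R}^E_{>0}$ and one (weakly connected) component, with $V=\{1,\dots,m\}$. Let $T=\{1,\dots,t\}\subseteq V_s$ be (the vertex set of) a terminal strong component, and let $\hat q\in\mathbb{R}^{V_s}_{\ge0}$ satisfy $R_k\hat q=0$, $\operatorname{supp}\hat q=T$, and $\hat q_1\ge\cdots\ge\hat q_t>0$. Let $\beta=R_k1_{V_s}\in\mathbb{R}^V$. Then $\sum_{i'=1}^{i}\beta_{i'}\ge0$ for every $i\in T$; if $i<t$ and $\hat q_i>\hat q_{i+1}$, then $\sum_{i'=1}^{i}\beta_{i'}>0$; and $\sum_{i'=1}^{t}\beta_{i'}=0$ if and only if $T=V$.
   Context: $V_s\subseteq V$ is the set of vertices with at least one outgoing edge. The rectangular Laplacian $R_k\in\mathbb{R}^{V\times V_s}$ has entries $(R_k)_{i,j}=k_{j\to i}$ if $(j\to i)\in E$, $(R_k)_{j,j}=-\sum_{(j\to i')\in E}k_{j\to i'}$, and $0$ otherwise. $1_{V_s}$ is the all-ones vector. A terminal strong component is a strongly connected component with no edge leaving it. *)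

theory Defs
  imports Complex_Main
begin

text \<open>A labelled digraph is given by a vertex set V, an edge set E of ordered
pairs (j,i) meaning the edge j -> i, and edge labels k.\<close>

definition simple_digraph :: "nat set \<Rightarrow> (nat \<times> nat) set \<Rightarrow> bool" where
  "simple_digraph V E \<longleftrightarrow> finite V \<and> E \<subseteq> V \<times> V \<and> (\<forall>v. (v, v) \<notin> E)"

definition weakly_connected :: "nat set \<Rightarrow> (nat \<times> nat) set \<Rightarrow> bool" where
  "weakly_connected V E \<longleftrightarrow> V \<noteq> {} \<and> (\<forall>u\<in>V. \<forall>v\<in>V. (u, v) \<in> (E \<union> E\<inverse>)\<^sup>*)"

definition source_vertices :: "nat set \<Rightarrow> (nat \<times> nat) set \<Rightarrow> nat set" where
  "source_vertices V E = {j \<in> V. \<exists>i. (j, i) \<in> E}"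

definition strong_component :: "nat set \<Rightarrow> (nat \<times> nat) set \<Rightarrow> nat set \<Rightarrow> bool" where
  "strong_component V E C \<longleftrightarrow> C \<noteq> {} \<and> C \<subseteq> V \<and>
     (\<forall>u\<in>C. \<forall>v\<in>C. (u, v) \<in> E\<^sup>*) \<and>
     (\<forall>u\<in>C. \<forall>v\<in>V. (u, v) \<in> E\<^sup>* \<and> (v, u) \<in> E\<^sup>* \<longrightarrow> v \<in> C)"

definition terminal_strong_component :: "nat set \<Rightarrow> (nat \<times> nat) set \<Rightarrow> nat set \<Rightarrow> bool" where
  "terminal_strong_component V E C \<longleftrightarrow> strong_component V E C \<and>
     (\<forall>u v. (u, v) \<in> E \<and> u \<in> C \<longrightarrow> v \<in> C)"

text \<open>Entry (i,j) of the rectangular Laplacian R_k (i in V, j in V_s).\<close>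
definition rect_laplacian :: "(nat \<times> nat) set \<Rightarrow> (nat \<times> nat \<Rightarrow> real) \<Rightarrow> nat \<Rightarrow> nat \<Rightarrow> real" where
  "rect_laplacian E k i j =
     (if (j, i) \<in> E then k (j, i)
      else if i = j then - (\<Sum>i'\<in>{i'. (j, i') \<in> E}. k (j, i'))
      else 0)"

definition rect_laplacian_mult ::
  "nat set \<Rightarrow> (nat \<times> nat) set \<Rightarrow> (nat \<times> nat \<Rightarrow> real) \<Rightarrow> (nat \<Rightarrow> real) \<Rightarrow> nat \<Rightarrow> real" where
  "rect_laplacian_mult V E k x i = (\<Sum>j\<in>source_vertices V E. rect_laplacian E k i j * x j)"

end

theory Submission imports Defs begin

lemma col:
  assumes fin: "finite V" and EV: "E \<subseteq> V \<times> V" and noloop: "\<forall>v. (v,v)\<notin>E" and SV: "S \<subseteq> V"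
  shows "(\<Sum>i\<in>S. rect_laplacian E k i j) = (\<Sum>i\<in>{i. (j,i)\<in>E}. k (j,i) * ((if i \<in> S then 1 else 0) - (if j \<in> S then 1 else 0)))"
proof -
  define D where "D = (\<Sum>i'\<in>{i'. (j, i') \<in> E}. k (j, i'))"
  have fo: "finite {i. (j,i)\<in>E}" using EV fin by (auto intro: finite_subset[of _ V])
  have finS: "finite S" using SV fin finite_subset by blast
  have "(\<Sum>i\<in>S. rect_laplacian E k i j) = (\<Sum>i\<in>S. (if i \<in> {i. (j,i)\<in>E} then k (j,i) else 0) + (if i = j then -D else 0))"
    by (rule sum.cong) (use noloop in \<open>auto simp: rect_laplacian_def D_def\<close>)
  also have "\<dots> = (\<Sum>i\<in>S \<inter> {i. (j,i)\<in>E}. k (j,i)) + (if j \<in> S then -D else 0)"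
    by (simp add: sum.distrib sum.inter_restrict[OF finS] finS)
  also have "\<dots> = (\<Sum>i\<in>{i. (j,i)\<in>E}. k (j,i) * (if i \<in> S then 1 else 0)) - (if j \<in> S then 1 else 0) * D"
    using sum.inter_restrict[OF fo, of "\<lambda>i. k (j,i)" S] by (simp add: Int_commute if_distrib cong: if_cong)
  also have "\<dots> = (\<Sum>i\<in>{i. (j,i)\<in>E}. k (j,i) * ((if i \<in> S then 1 else 0) - (if j \<in> S then 1 else 0)))"
    by (simp add: D_def right_diff_distrib sum_subtractf sum_distrib_left sum_distrib_right mult.commute)
  finally show ?thesis .
qed

abbreviation ind :: "nat set \<Rightarrow> nat \<Rightarrow> real" where "ind S x \<equiv> (if x \<in> S then 1 else 0)"

lemma flow:
  assumes fin: "finite V" and EV: "E \<subseteq> V \<times> V" and noloop: "\<forall>v. (v,v)\<notin>E" and SV: "S \<subseteq> V"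
  shows "(\<Sum>i\<in>S. rect_laplacian_mult V E k x i) = (\<Sum>e\<in>E. k e * x (fst e) * (ind S (snd e) - ind S (fst e)))"
proof -
  let ?Vs = "source_vertices V E"
  have finS: "finite S" using SV fin finite_subset by blast
  have finVs: "finite ?Vs" using fin by (simp add: source_vertices_def)
  have fo: "\<And>j. finite {i. (j,i)\<in>E}" using EV fin by (auto intro: finite_subset[of _ V])
  have "(\<Sum>i\<in>S. rect_laplacian_mult V E k x i) = (\<Sum>j\<in>?Vs. \<Sum>i\<in>S. rect_laplacian E k i j * x j)"
    unfolding rect_laplacian_mult_def by (rule sum.swap)
  also have "\<dots> = (\<Sum>j\<in>?Vs. \<Sum>i\<in>{i. (j,i)\<in>E}. k (j,i) * x j * (ind S i - ind S j))"
  proof (rule sum.cong[OF refl])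
    fix j assume "j \<in> ?Vs"
    have "(\<Sum>i\<in>S. rect_laplacian E k i j * x j) = (\<Sum>i\<in>S. rect_laplacian E k i j) * x j"
      by (simp add: sum_distrib_right)
    also have "\<dots> = (\<Sum>i\<in>{i. (j,i)\<in>E}. k (j,i) * (ind S i - ind S j)) * x j"
      using col[OF fin EV noloop SV] by simp
    also have "\<dots> = (\<Sum>i\<in>{i. (j,i)\<in>E}. k (j,i) * (ind S i - ind S j) * x j)"
      by (simp add: sum_distrib_right)
    also have "\<dots> = (\<Sum>i\<in>{i. (j,i)\<in>E}. k (j,i) * x j * (ind S i - ind S j))"
      by (rule sum.cong) (simp_all add: mult_ac)
    finally show "(\<Sum>i\<in>S. rect_laplacian E k i j * x j) = (\<Sum>i\<in>{i. (j,i)\<in>E}. k (j,i) * x j * (ind S i - ind S j))" .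
  qed
  also have "\<dots> = (\<Sum>e\<in>Sigma ?Vs (\<lambda>j. {i. (j,i)\<in>E}). k e * x (fst e) * (ind S (snd e) - ind S (fst e)))"
    by (subst sum.Sigma[OF finVs]) (auto simp: fo split_beta intro!: sum.cong)
  also have "Sigma ?Vs (\<lambda>j. {i. (j,i)\<in>E}) = E"
    using EV by (auto simp: source_vertices_def)
  finally show ?thesis .
qed

lemma cut_edge:
  assumes "(u,v) \<in> R\<^sup>*" "u \<in> S" "v \<notin> S"
  shows "\<exists>a b. (a,b) \<in> R \<and> a \<in> S \<and> b \<notin> S"
  using assms by (induction rule: rtrancl_induct) auto

lemma qanti:
  fixes q :: "nat \<Rightarrow> real" and t a b :: nat
  assumes "\<forall>i. 1 \<le> i \<and> i < t \<longrightarrow> q i \<ge> q (i + 1)" "1 \<le> a" "a \<le> b" "b \<le> t"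
  shows "q b \<le> (q a :: real)"
  using assms(3,4)
proof (induction b rule: dec_induct)
  case base then show ?case by simp
next
  case (step n) then show ?case using assms(1,2) by (metis add.commute le_trans plus_1_eq_Suc Suc_leD less_eq_Suc_le order_trans linorder_not_le)
qed

theorem lemma14:
  fixes m t :: nat and E :: "(nat \<times> nat) set" and k :: "nat \<times> nat \<Rightarrow> real"
    and q :: "nat \<Rightarrow> real" and \<beta> :: "nat \<Rightarrow> real"
  assumes simple: "simple_digraph {1..m} E"
    and kpos: "\<forall>e\<in>E. k e > 0"
    and conn: "weakly_connected {1..m} E"
    and TVs: "{1..t} \<subseteq> source_vertices {1..m} E"
    and Tterm: "terminal_strong_component {1..m} E {1..t}"
    and qnonneg: "\<forall>j\<in>source_vertices {1..m} E. q j \<ge> 0"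
    and qker: "\<forall>i\<in>{1..m}. rect_laplacian_mult {1..m} E k q i = 0"
    and qsupp: "{j \<in> source_vertices {1..m} E. q j \<noteq> 0} = {1..t}"
    and qmono: "\<forall>i. 1 \<le> i \<and> i < t \<longrightarrow> q i \<ge> q (i + 1)"
    and qpos: "q t > 0"
    and beta: "\<beta> = rect_laplacian_mult {1..m} E k (\<lambda>_. 1)"
  shows "(\<forall>i\<in>{1..t}. (\<Sum>i'=1..i. \<beta> i') \<ge> 0)
       \<and> (\<forall>i\<in>{1..t}. i < t \<and> q i > q (i + 1) \<longrightarrow> (\<Sum>i'=1..i. \<beta> i') > 0)
       \<and> ((\<Sum>i'=1..t. \<beta> i') = 0 \<longleftrightarrow> {1..t} = {1..m})"
proof -
  let ?V = "{1..m} :: nat set" and ?T = "{1..t} :: nat set" and ?Vs = "source_vertices {1..m} E"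
  have fin: "finite ?V" by simp
  have EV: "E \<subseteq> ?V \<times> ?V" and noloop: "\<forall>v. (v,v)\<notin>E" using simple by (auto simp: simple_digraph_def)
  have finE: "finite E" using finite_subset[OF EV] by simp
  have sc: "strong_component ?V E ?T" using Tterm unfolding terminal_strong_component_def by blast
  have TV: "?T \<subseteq> ?V" and Tne: "?T \<noteq> {}" and Tsc: "\<forall>u\<in>?T. \<forall>v\<in>?T. (u, v) \<in> E\<^sup>*"
    using sc unfolding strong_component_def by blast+
  have t1: "1 \<le> t" using Tne by simp
  have tm: "t \<le> m" using TV t1 by auto
  have trm: "\<And>a b. (a,b) \<in> E \<Longrightarrow> a \<in> ?T \<Longrightarrow> b \<in> ?T" using Tterm unfolding terminal_strong_component_def by blast
  have srcVs: "\<And>a b. (a,b) \<in> E \<Longrightarrow> a \<in> ?Vs" using EV by (auto simp: source_vertices_def)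
  have qzero: "\<And>j. j \<in> ?Vs \<Longrightarrow> j \<notin> ?T \<Longrightarrow> q j = 0" using qsupp by blast
  have qposT: "\<And>j. j \<in> ?T \<Longrightarrow> q j > 0"
  proof -
    fix j assume j: "j \<in> ?T"
    then have "j \<in> {j \<in> ?Vs. q j \<noteq> 0}" using qsupp by simp
    then show "q j > 0" using qnonneg by force
  qed
  define F where "F S x = (\<Sum>e\<in>E. k e * x (fst e) * (ind S (snd e) - ind S (fst e)))" for S and x :: "nat \<Rightarrow> real"
  have sumbeta: "(\<Sum>i'=1..c. \<beta> i') = F {1..c} (\<lambda>_. 1)" if "c \<le> t" for c
    unfolding beta F_def by (rule flow[OF fin EV noloop]) (use that tm in auto)
  have sumq: "F {1..c} q = 0" if "c \<le> t" for c
  proof -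
    have "F {1..c} q = (\<Sum>i\<in>{1..c}. rect_laplacian_mult ?V E k q i)"
      unfolding F_def by (rule flow[OF fin EV noloop, symmetric]) (use that tm in auto)
    also have "\<dots> = 0" using qker that tm by (auto intro!: sum.neutral)
    finally show ?thesis .
  qed
  have kposE: "\<And>e. e \<in> E \<Longrightarrow> k e > 0" using kpos by blast
  have Tnonneg: "\<And>e. e \<in> E \<Longrightarrow> 0 \<le> k e * 1 * (ind ?T (snd e) - ind ?T (fst e))"
  proof -
    fix e assume e: "e \<in> E"
    obtain a b where ab: "e = (a,b)" by (cases e)
    show "0 \<le> k e * 1 * (ind ?T (snd e) - ind ?T (fst e))"
      using trm[of a b] e ab kposE[OF e] by auto
  qed
  have part1: "(\<Sum>i'=1..c. \<beta> i') \<ge> 0 \<and> (c < t \<and> q c > q (c + 1) \<longrightarrow> (\<Sum>i'=1..c. \<beta> i') > 0)"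
    if c: "c \<in> ?T" for c
  proof (cases "c = t")
    case True
    have "F ?T (\<lambda>_. 1) \<ge> 0" unfolding F_def using Tnonneg by (intro sum_nonneg) auto
    then show ?thesis using sumbeta[of t] True by simp
  next
    case False
    with c have ct: "c < t" by simp
    define p where "p = q (c+1)"
    have pp: "p > 0" unfolding p_def using qposT ct c by simp
    let ?S = "{1..c}"
    have le: "k e * q (fst e) * (ind ?S (snd e) - ind ?S (fst e)) \<le> p * (k e * 1 * (ind ?S (snd e) - ind ?S (fst e)))"
      if e: "e \<in> E" for e
    proof -
      obtain a b where ab: "e = (a,b)" by (cases e)
      have ke: "k e > 0" using kposE[OF e] .
      show ?thesis
      proof (cases "a \<in> ?S")
        case True
        then have "q a \<ge> q c" using qanti[OF qmono, of a c] c by auto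
        moreover have "q c \<ge> p" using qanti[OF qmono, of c "c+1"] c ct unfolding p_def by auto
        then have qa: "q a \<ge> p" using \<open>q a \<ge> q c\<close> by linarith
        show ?thesis
        proof (cases "b \<in> ?S")
          case True
          then show ?thesis using ab \<open>a \<in> ?S\<close> by simp
        next
          case False
          have "k e * p \<le> k e * q a" using qa ke by simp
          then show ?thesis using ab \<open>a \<in> ?S\<close> False by (simp add: mult.commute)
        qed
      next
        case False
        have "q a \<le> p"
        proof (cases "a \<in> ?T")
          case True
          then show ?thesis using False qanti[OF qmono, of "c+1" a] c unfolding p_def by auto
        next
          case False
          then show ?thesis using qzero srcVs e ab pp by auto
        qed
        then have kq: "k e * q a \<le> k e * p" using ke by simp
        show ?thesis
        proof (cases "b \<in> ?S")
          case True
          then show ?thesis using ab \<open>a \<notin> ?S\<close> kq by (simp add: mult.commute)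
        next
          case False
          then show ?thesis using ab \<open>a \<notin> ?S\<close> by auto
        qed
      qed
    qed
    have "0 = F ?S q" using sumq ct by simp
    also have "\<dots> \<le> (\<Sum>e\<in>E. p * (k e * 1 * (ind ?S (snd e) - ind ?S (fst e))))"
      unfolding F_def by (rule sum_mono) (rule le)
    also have "\<dots> = p * F ?S (\<lambda>_. 1)" unfolding F_def by (simp add: sum_distrib_left)
    finally have "0 \<le> p * F ?S (\<lambda>_. 1)" .
    then have nn: "F ?S (\<lambda>_. 1) \<ge> 0" using pp by (simp add: zero_le_mult_iff)
    have strict: "F ?S (\<lambda>_. 1) > 0" if qc: "q c > p"
    proof -
      have "(1, t) \<in> E\<^sup>*" using Tsc t1 by simp
      then obtain a b where ab: "(a,b) \<in> E" "a \<in> ?S" "b \<notin> ?S" using cut_edge[of 1 t E ?S] c ct by auto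
      have "q a \<ge> q c" using qanti[OF qmono, of a c] c ab by auto
      with qc have qa: "q a > p" by simp
      have "0 = F ?S q" using sumq ct by simp
      also have "\<dots> < (\<Sum>e\<in>E. p * (k e * 1 * (ind ?S (snd e) - ind ?S (fst e))))"
        unfolding F_def
      proof (rule sum_strict_mono_ex1[OF finE])
        show "\<forall>x\<in>E. k x * q (fst x) * (ind ?S (snd x) - ind ?S (fst x)) \<le> p * (k x * 1 * (ind ?S (snd x) - ind ?S (fst x)))"
          using le by blast
        show "\<exists>x\<in>E. k x * q (fst x) * (ind ?S (snd x) - ind ?S (fst x)) < p * (k x * 1 * (ind ?S (snd x) - ind ?S (fst x)))"
        proof (rule bexI[of _ "(a,b)"])
          have "k (a,b) * p < k (a,b) * q a" using qa kposE[OF ab(1)] by simp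
          then show "k (a,b) * q (fst (a,b)) * (ind ?S (snd (a,b)) - ind ?S (fst (a,b))) < p * (k (a,b) * 1 * (ind ?S (snd (a,b)) - ind ?S (fst (a,b))))"
            using ab(2,3) by (simp add: mult.commute)
        qed (rule ab(1))
      qed
      also have "\<dots> = p * F ?S (\<lambda>_. 1)" unfolding F_def by (simp add: sum_distrib_left)
      finally show ?thesis using pp by (simp add: zero_less_mult_iff)
    qed
    show ?thesis using nn strict sumbeta[of c] ct unfolding p_def by auto
  qed
  have part3: "(\<Sum>i'=1..t. \<beta> i') = 0 \<longleftrightarrow> ?T = ?V"
  proof
    assume TeqV: "?T = ?V"
    have "F ?T (\<lambda>_. 1) = 0" unfolding F_def
      by (rule sum.neutral) (use EV TeqV in auto)
    then show "(\<Sum>i'=1..t. \<beta> i') = 0" using sumbeta[of t] by simp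
  next
    assume z: "(\<Sum>i'=1..t. \<beta> i') = 0"
    show "?T = ?V"
    proof (rule ccontr)
      assume "?T \<noteq> ?V"
      then have tm': "t < m" using tm by (metis le_neq_implies_less)
      have "(1, m) \<in> (E \<union> E\<inverse>)\<^sup>*" using conn t1 tm' by (auto simp: weakly_connected_def)
      moreover have "1 \<in> ?T" "m \<notin> ?T" using t1 tm' by auto
      ultimately have "\<exists>a b. (a,b) \<in> E \<union> E\<inverse> \<and> a \<in> ?T \<and> b \<notin> ?T" by (rule cut_edge)
      then obtain a b where ab: "(a,b) \<in> E \<union> E\<inverse>" "a \<in> ?T" "b \<notin> ?T" by blast
      then have ba: "(b,a) \<in> E" using trm by auto
      have "F ?T (\<lambda>_. 1) > 0" unfolding F_def
      proof (rule sum_pos2[OF finE ba])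
        show "0 < k (b,a) * 1 * (ind ?T (snd (b,a)) - ind ?T (fst (b,a)))" using ab kposE[OF ba] by simp
        show "\<And>i. i \<in> E \<Longrightarrow> 0 \<le> k i * 1 * (ind ?T (snd i) - ind ?T (fst i))" by (rule Tnonneg)
      qed
      then show False using z sumbeta[of t] by simp
    qed
  qed
  show ?thesis using part1 part3 by blast
qed

end
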